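(* Let $N,M\ge 1$ be integers and let $\mathcal H=\mathcal H_+\oplus\mathcal H_-$ with $\mathcal H_+=\mathbb C^N$, $\mathcal H_-=\mathbb C^M$. Let $B$ be a positive semidefinite Hermitian $N\times N$ matrix, $D$ a skew-Hermitian $M\times M$ matrix, and $u$ an $M\times N$ complex matrix that is a partial isometry (i.e. $uu^*u=u$). Let $$\mu=\begin{pmatrix}0 & -Bu^*\\ uB & D\end{pmatrix}.$$ Let $n\ge 1$ and $k$ be integers with $n/2+1<k\le n+1$. Then $$i^{n+1}\big(\mu\, H^{n-1}_{k-1}(\mu)\big)_{--}\,u=0.$$ Consequently, in the system of equations $\frac{\partial}{\partial t^n_k}u=i^{n+1}(\mu H^{n-1}_{k-1}(\mu))_{--}u$, only the times $t^n_k$ with $k\le n/2+1$ give nontrivial evolution.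
   Context: $P_+$ and $P_-$ denote the orthogonal projectors of $\mathcal H$ onto $\mathcal H_+$ and $\mathcal H_-$; for an operator $X$ on $\mathcal H$, $X_{--}$ denotes the block $P_-XP_-$ regarded as an operator on $\mathcal H_-$. For integers $m\ge 0$ and $0\le l\le m+1$ and a matrix $\mu$ on $\mathcal H$, define $$H^m_l(\mu)=\sum_{\substack{i_0,\dots,i_m\in\{0,1\}\\ i_0+\dots+i_m=l}} P_+^{i_0}\mu P_+^{i_1}\mu\cdots\mu P_+^{i_m},$$ with $P_+^0=I$ the identity and $P_+^1=P_+$ (so $H^m_l$ has degree $m$ in $\mu$ and degree $l$ in $P_+$; e.g. $H^0_0=I$, $H^0_1=P_+$). *)

theory Defs
  imports "Jordan_Normal_Form.Schur_Decomposition"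
begin

text \<open>Hilbert space H = C^N (+) C^M, realised as complex (N+M) x (N+M) matrices.\<close>

definition hermitian_mat :: "complex mat \<Rightarrow> bool" where
  "hermitian_mat A \<longleftrightarrow> mat_adjoint A = A"

definition psd_mat :: "nat \<Rightarrow> complex mat \<Rightarrow> bool" where
  "psd_mat n A \<longleftrightarrow> A \<in> carrier_mat n n \<and> hermitian_mat A \<and>
     (\<forall>v \<in> carrier_vec n. \<exists>r::real. r \<ge> 0 \<and> (A *\<^sub>v v) \<bullet>c v = complex_of_real r)"

definition Pplus :: "nat \<Rightarrow> nat \<Rightarrow> complex mat" where
  "Pplus N M = four_block_mat (1\<^sub>m N) (0\<^sub>m N M) (0\<^sub>m M N) (0\<^sub>m M M)"

definition Ppow :: "nat \<Rightarrow> nat \<Rightarrow> bool \<Rightarrow> complex mat" where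
  "Ppow N M b = (if b then Pplus N M else 1\<^sub>m (N + M))"

text \<open>For a word i_0 ... i_m, the product P^{i_0} mu P^{i_1} mu ... mu P^{i_m}.\<close>
fun hprod :: "nat \<Rightarrow> nat \<Rightarrow> complex mat \<Rightarrow> bool list \<Rightarrow> complex mat" where
  "hprod N M mu [] = 1\<^sub>m (N + M)"
| "hprod N M mu [b] = Ppow N M b"
| "hprod N M mu (b # bs) = Ppow N M b * mu * hprod N M mu bs"

definition Hml :: "nat \<Rightarrow> nat \<Rightarrow> nat \<Rightarrow> nat \<Rightarrow> complex mat \<Rightarrow> complex mat" where
  "Hml N M m l mu = foldr (\<lambda>w acc. hprod N M mu w + acc)
      (filter (\<lambda>w. count_list w True = l) (List.n_lists (Suc m) [False, True]))
      (0\<^sub>m (N + M) (N + M))"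

definition minus_block :: "nat \<Rightarrow> nat \<Rightarrow> complex mat \<Rightarrow> complex mat" where
  "minus_block N M X = mat M M (\<lambda>(i, j). X $$ (N + i, N + j))"

definition mu_mat :: "nat \<Rightarrow> nat \<Rightarrow> complex mat \<Rightarrow> complex mat \<Rightarrow> complex mat \<Rightarrow> complex mat" where
  "mu_mat N M B D u = four_block_mat (0\<^sub>m N N) (- (B * mat_adjoint u)) (u * B) D"

end

theory Submission imports Defs begin

definition Qm :: "nat \<Rightarrow> nat \<Rightarrow> complex mat" where
  "Qm N M = mat (N+M) (N+M) (\<lambda>(i,j). if i = j \<and> N \<le> i then 1 else 0)"

lemma Pplus_carrier: "Pplus N M \<in> carrier_mat (N+M) (N+M)"
  unfolding Pplus_def by auto

lemma Pplus_dim[simp]: "dim_row (Pplus N M) = N+M" "dim_col (Pplus N M) = N+M"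
  using Pplus_carrier[of N M] by auto

lemma Qm_dim[simp]: "dim_row (Qm N M) = N+M" "dim_col (Qm N M) = N+M"
  by (auto simp: Qm_def)

lemma Pplus_idx: "a < N+M \<Longrightarrow> b < N+M \<Longrightarrow> Pplus N M $$ (a,b) = (if a = b \<and> a < N then 1 else 0)"
  unfolding Pplus_def by (auto simp: index_mat_four_block)

lemma P_left: assumes X: "X \<in> carrier_mat (N+M) (N+M)" and ab: "a < N+M" "b < N+M"
  shows "(Pplus N M * X) $$ (a,b) = (if a < N then X $$ (a,b) else 0)"
proof -
  have "(Pplus N M * X) $$ (a,b) = (\<Sum>l\<in>{0..<N+M}. Pplus N M $$ (a,l) * X $$ (l,b))"
    using X ab Pplus_carrier[of N M] by (simp add: scalar_prod_def row_def col_def)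
  also have "\<dots> = (\<Sum>l\<in>{0..<N+M}. if l = a then (if a < N then X $$ (a,b) else 0) else 0)"
    by (rule sum.cong) (auto simp: Pplus_idx ab)
  also have "\<dots> = (if a < N then X $$ (a,b) else 0)" using ab by simp
  finally show ?thesis .
qed

lemma P_right: assumes X: "X \<in> carrier_mat (N+M) (N+M)" and ab: "a < N+M" "b < N+M"
  shows "(X * Pplus N M) $$ (a,b) = (if b < N then X $$ (a,b) else 0)"
proof -
  have "(X * Pplus N M) $$ (a,b) = (\<Sum>l\<in>{0..<N+M}. X $$ (a,l) * Pplus N M $$ (l,b))"
    using X ab Pplus_carrier[of N M] by (simp add: scalar_prod_def row_def col_def)
  also have "\<dots> = (\<Sum>l\<in>{0..<N+M}. if l = b then (if b < N then X $$ (a,b) else 0) else 0)"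
    by (rule sum.cong) (auto simp: Pplus_idx ab)
  also have "\<dots> = (if b < N then X $$ (a,b) else 0)" using ab by simp
  finally show ?thesis .
qed

lemma Q_right: assumes X: "X \<in> carrier_mat (N+M) (N+M)" and ab: "a < N+M" "b < N+M"
  shows "(X * Qm N M) $$ (a,b) = (if N \<le> b then X $$ (a,b) else 0)"
proof -
  have "(X * Qm N M) $$ (a,b) = (\<Sum>l\<in>{0..<N+M}. X $$ (a,l) * Qm N M $$ (l,b))"
    using X ab by (simp add: scalar_prod_def row_def col_def Qm_def)
  also have "\<dots> = (\<Sum>l\<in>{0..<N+M}. if l = b then (if N \<le> b then X $$ (a,b) else 0) else 0)"
    by (rule sum.cong) (auto simp: Qm_def ab)
  also have "\<dots> = (if N \<le> b then X $$ (a,b) else 0)" using ab by simp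
  finally show ?thesis .
qed

lemma Q_carrier: "Qm N M \<in> carrier_mat (N+M) (N+M)" by (simp add: Qm_def)

lemma PQ: "Pplus N M * Qm N M = 0\<^sub>m (N+M) (N+M)"
  by (rule eq_matI) (auto simp: Q_right[OF Pplus_carrier] Pplus_idx Pplus_carrier Q_carrier simp del: index_mult_mat(1))

lemma mu_carrier: assumes "B \<in> carrier_mat N N" "D \<in> carrier_mat M M" "u \<in> carrier_mat M N"
  shows "mu_mat N M B D u \<in> carrier_mat (N+M) (N+M)"
  using assms unfolding mu_mat_def by (intro four_block_carrier_mat) auto

lemma mu_idx: assumes "B \<in> carrier_mat N N" "D \<in> carrier_mat M M" "u \<in> carrier_mat M N"
  and "a < N" "b < N" shows "mu_mat N M B D u $$ (a,b) = 0"
  using assms unfolding mu_mat_def by (simp add: index_mat_four_block)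

lemma PmuP: assumes mu: "mu \<in> carrier_mat (N+M) (N+M)" and z: "\<And>a b. a < N \<Longrightarrow> b < N \<Longrightarrow> mu $$ (a,b) = 0"
  shows "Pplus N M * mu * Pplus N M = 0\<^sub>m (N+M) (N+M)"
proof (rule eq_matI)
  fix i j assume ij: "i < dim_row (0\<^sub>m (N+M) (N+M) :: complex mat)" "j < dim_col (0\<^sub>m (N+M) (N+M) :: complex mat)"
  have c: "Pplus N M * mu \<in> carrier_mat (N+M) (N+M)" using mu Pplus_carrier by auto
  show "(Pplus N M * mu * Pplus N M) $$ (i, j) = 0\<^sub>m (N+M) (N+M) $$ (i, j)"
    using ij by (simp add: P_right[OF c] P_left[OF mu] z del: index_mult_mat(1))
qed (use mu in auto)

lemma Ppow_carrier: "Ppow N M b \<in> carrier_mat (N+M) (N+M)"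
  unfolding Ppow_def using Pplus_carrier by auto

lemma hprod_carrier: assumes mu: "mu \<in> carrier_mat (N+M) (N+M)"
  shows "hprod N M mu w \<in> carrier_mat (N+M) (N+M)"
  using mu by (induction N M mu w rule: hprod.induct) (auto intro!: mult_carrier_mat Ppow_carrier)


lemma assoc_dim: "dim_col A = dim_row B \<Longrightarrow> dim_col B = dim_row C \<Longrightarrow> A * B * C = A * (B * C)"
  by (rule assoc_mult_mat[of A "dim_row A" "dim_col A" B "dim_col B" C "dim_col C"]) auto

lemma key:
  assumes mu: "mu \<in> carrier_mat (N+M) (N+M)"
    and PmuP: "Pplus N M * mu * Pplus N M = 0\<^sub>m (N+M) (N+M)"
  shows "w \<noteq> [] \<Longrightarrow> (2 * count_list w True > length w \<longrightarrow> mu * hprod N M mu w * Qm N M = 0\<^sub>m (N+M) (N+M))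
     \<and> (2 * count_list w True \<ge> length w \<longrightarrow> Pplus N M * mu * hprod N M mu w * Qm N M = 0\<^sub>m (N+M) (N+M))"
proof (induction w)
  case Nil then show ?case by simp
next
  case (Cons b bs)
  let ?P = "Pplus N M" and ?Q = "Qm N M" and ?Z = "0\<^sub>m (N+M) (N+M) :: complex mat"
  have P: "?P \<in> carrier_mat (N+M) (N+M)" by (rule Pplus_carrier)
  have mud[simp]: "dim_row mu = N+M" "dim_col mu = N+M" using mu by auto
  have Q: "?Q \<in> carrier_mat (N+M) (N+M)" by (rule Q_carrier)
  have muPQ: "mu * ?P * ?Q = ?Z"
    using mu P Q PQ[of N M] by (simp add: assoc_mult_mat[OF mu P Q])
  have PmuPQ: "?P * mu * ?P * ?Q = ?Z"
    using mu P Q PmuP by simp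
  show ?case
  proof (cases "bs = []")
    case True
    then show ?thesis using muPQ PmuPQ by (cases b) (auto simp: Ppow_def)
  next
    case False
    then obtain c cs where bs: "bs = c # cs" by (cases bs) auto
    let ?H = "hprod N M mu bs"
    have H: "?H \<in> carrier_mat (N+M) (N+M)" by (rule hprod_carrier[OF mu])
    have Hd[simp]: "dim_row ?H = N+M" "dim_col ?H = N+M" using H by auto
    have hp: "hprod N M mu (b # bs) = Ppow N M b * mu * ?H" using bs by simp
    have IH: "(2 * count_list bs True > length bs \<longrightarrow> mu * ?H * ?Q = ?Z)
     \<and> (2 * count_list bs True \<ge> length bs \<longrightarrow> ?P * mu * ?H * ?Q = ?Z)"
      using Cons.IH False by blast
    show ?thesis
    proof (cases b)
      case True
      have PmH: "?P * mu * ?H \<in> carrier_mat (N+M) (N+M)" using mu P H by auto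
      have e1: "mu * (?P * mu * ?H) * ?Q = mu * (?P * mu * ?H * ?Q)"
        by (rule assoc_mult_mat[OF mu PmH Q])
      have e2: "?P * mu * (?P * mu * ?H) * ?Q = (?P * mu * ?P) * (mu * ?H * ?Q)"
        using mu P Q H by (simp add: assoc_dim)
      have z1: "mu * ?Z = ?Z" using mu by simp
      have z2: "?Z * (mu * ?H * ?Q) = ?Z" using mu H Q by simp
      show ?thesis unfolding hp using True IH e1 e2 z1 z2 PmuP by (simp add: Ppow_def)
    next
      case False
      have e1: "mu * (1\<^sub>m (N+M) * mu * ?H) * ?Q = mu * (mu * ?H * ?Q)"
        using mu P Q H by (simp add: assoc_dim)
      have e2: "?P * mu * (1\<^sub>m (N+M) * mu * ?H) * ?Q = ?P * mu * (mu * ?H * ?Q)"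
        using mu P Q H by (simp add: assoc_dim)
      have z1: "mu * ?Z = ?Z" using mu by simp
      have z2: "?P * mu * ?Z = ?Z" using mu P by simp
      show ?thesis unfolding hp using False IH e1 e2 z1 z2 by (auto simp: Ppow_def)
    qed
  qed
qed


lemma foldr_carrier: assumes mu: "mu \<in> carrier_mat (N+M) (N+M)"
  shows "foldr (\<lambda>w acc. hprod N M mu w + acc) ws (0\<^sub>m (N + M) (N + M)) \<in> carrier_mat (N+M) (N+M)"
  by (induction ws) (auto intro!: add_carrier_mat hprod_carrier[OF mu])

lemma foldr_zero: assumes mu: "mu \<in> carrier_mat (N+M) (N+M)"
  shows "(\<forall>w\<in>set ws. mu * hprod N M mu w * Qm N M = 0\<^sub>m (N+M) (N+M)) \<Longrightarrow>
    mu * foldr (\<lambda>w acc. hprod N M mu w + acc) ws (0\<^sub>m (N + M) (N + M)) * Qm N M = 0\<^sub>m (N+M) (N+M)"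
proof (induction ws)
  case Nil then show ?case using mu Q_carrier[of N M] by simp
next
  case (Cons w ws)
  let ?A = "foldr (\<lambda>w acc. hprod N M mu w + acc) ws (0\<^sub>m (N + M) (N + M))"
  have A: "?A \<in> carrier_mat (N+M) (N+M)" by (rule foldr_carrier[OF mu])
  have H: "hprod N M mu w \<in> carrier_mat (N+M) (N+M)" by (rule hprod_carrier[OF mu])
  have "mu * (hprod N M mu w + ?A) * Qm N M = (mu * hprod N M mu w + mu * ?A) * Qm N M"
    by (simp add: mult_add_distrib_mat[OF mu H A])
  also have "\<dots> = mu * hprod N M mu w * Qm N M + mu * ?A * Qm N M"
    by (rule add_mult_distrib_mat[of _ "N+M" "N+M"]) (use mu H A Q_carrier in auto)
  also have "\<dots> = 0\<^sub>m (N+M) (N+M)" using Cons by simp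
  finally show ?case by simp
qed

lemma minus_block_Q: assumes X: "X \<in> carrier_mat (N+M) (N+M)"
  shows "minus_block N M X = minus_block N M (X * Qm N M)"
  unfolding minus_block_def
  by (rule eq_matI) (auto simp: Q_right[OF X] simp del: index_mult_mat(1))

theorem proposition2p2:
  fixes N M n k :: nat and B D u :: "complex mat"
  assumes "N \<ge> 1" and "M \<ge> 1"
    and "B \<in> carrier_mat N N" and "psd_mat N B"
    and "D \<in> carrier_mat M M" and "mat_adjoint D = - D"
    and "u \<in> carrier_mat M N" and "u * mat_adjoint u * u = u"
    and "n \<ge> 1"
    and "real n / 2 + 1 < real k" and "k \<le> n + 1"
  shows "(\<i> ^ (n + 1)) \<cdot>\<^sub>m
           minus_block N M (mu_mat N M B D u * Hml N M (n - 1) (k - 1) (mu_mat N M B D u)) * u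
         = 0\<^sub>m M N"
proof -
  let ?mu = "mu_mat N M B D u"
  have mu: "?mu \<in> carrier_mat (N+M) (N+M)" by (rule mu_carrier[OF assms(3,5,7)])
  have PmuP: "Pplus N M * ?mu * Pplus N M = 0\<^sub>m (N+M) (N+M)"
    by (rule PmuP[OF mu], rule mu_idx[OF assms(3,5,7)])
  have nk: "2 * (k - 1) > n" using assms(10) by linarith
  have words: "\<forall>w\<in>set (filter (\<lambda>w. count_list w True = k - 1) (List.n_lists (Suc (n - 1)) [False, True])).
      ?mu * hprod N M ?mu w * Qm N M = 0\<^sub>m (N+M) (N+M)"
  proof
    fix w assume w: "w \<in> set (filter (\<lambda>w. count_list w True = k - 1) (List.n_lists (Suc (n - 1)) [False, True]))"
    then have w1: "w \<in> set (List.n_lists (Suc (n - 1)) [False, True])" and cnt: "count_list w True = k - 1"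
      by simp_all
    have len: "length w = n" using length_n_lists_elem[OF w1] assms(9) by simp
    have "w \<noteq> []" using len assms(9) by auto
    from key[OF mu PmuP this] show "?mu * hprod N M ?mu w * Qm N M = 0\<^sub>m (N+M) (N+M)"
      using len cnt nk by auto
  qed
  have HQ: "?mu * Hml N M (n - 1) (k - 1) ?mu * Qm N M = 0\<^sub>m (N+M) (N+M)"
    unfolding Hml_def by (rule foldr_zero[OF mu words])
  have X: "?mu * Hml N M (n - 1) (k - 1) ?mu \<in> carrier_mat (N+M) (N+M)"
    unfolding Hml_def by (rule mult_carrier_mat[OF mu foldr_carrier[OF mu]])
  have "minus_block N M (?mu * Hml N M (n - 1) (k - 1) ?mu) = 0\<^sub>m M M"
  proof -
    have "minus_block N M (?mu * Hml N M (n - 1) (k - 1) ?mu)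
        = minus_block N M (?mu * Hml N M (n - 1) (k - 1) ?mu * Qm N M)" by (rule minus_block_Q[OF X])
    also have "\<dots> = minus_block N M (0\<^sub>m (N+M) (N+M))" by (simp only: HQ)
    also have "\<dots> = 0\<^sub>m M M" unfolding minus_block_def by (rule eq_matI) auto
    finally show ?thesis .
  qed
  then show ?thesis using assms(7) by simp
qed

end
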